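(* The chronology $\ll_C$ on $\bar M$ is weakly distinguishing: for $\bar P,\bar Q\in\bar M$, one has $I^+_C(\bar P)=I^+_C(\bar Q)$ and $I^-_C(\bar P)=I^-_C(\bar Q)$ if and only if $\bar P=\bar Q$.
   Context: Let $M$ be a strongly causal spacetime (a time-oriented Lorentzian manifold in which every point has a neighbourhood that no non-spacelike curve enters more than once). $I^\pm(p)$ denotes the chronological future/past of $p\in M$, and $I^\pm(S)=\bigcup_{s\in S}I^\pm(s)$. A past-set is a set $I^-(S)$ with $S\subset M$. An IP is a nonempty past-set that is not the union of two proper subsets which are past-sets. IFs are defined dually. For an IP $P$, $f(P)=I^+(\{x:P\subset I^-(x)\})$. For an IF $P^*$, $p(P^* )=I^-(\{x:P^*\subset I^+(x)\})$. $R_{pf}$ is the set of pairs $(P,Q^* )$ (with $P$ an IP and $Q^*$ an IF) such that both of the following hold: - $Q^*$ is a maximal IF (under inclusion) contained in $f(P)$; - $P$ is a maximal IP contained in $p(Q^* )$. $\bar M$ is the set of pairs $\bar P=(P,P^* )$ such that one of the following holds: - $(P,P^* )\in R_{pf}$; - $P=\emptyset$ and $P^*$ is an IF occurring in no pair of $R_{pf}$; - $P^*=\emptyset$ and $P$ is an IP occurring in no pair of $R_{pf}$. $M$ is identified with its image under the injection $p\mapsto(I^-(p),I^+(p))\in\bar M$. On $\bar M$, $\bar P\ll_C\bar Q$ if and only if $P^*\cap Q\neq\emptyset$. For $\bar P\in\bar M$, $I^+_C(\bar P)=\{\bar Q\in\bar M:\bar P\ll_C\bar Q\}$ and $I^-_C(\bar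 P)=\{\bar Q\in\bar M:\bar Q\ll_C\bar P\}$. *)

theory Defs
  imports "HOL-Analysis.Analysis"
begin

text \<open>The points of the spacetime M form the type 'a (a Hausdorff topological space),
  and ch x y means x is in the chronological past of y.\<close>

definition strongly_causal_chronology :: "('a::t2_space \<Rightarrow> 'a \<Rightarrow> bool) \<Rightarrow> bool" where
  "strongly_causal_chronology ch \<longleftrightarrow>
     (\<forall>x y z. ch x y \<longrightarrow> ch y z \<longrightarrow> ch x z) \<and>
     (\<forall>x. \<not> ch x x) \<and>
     (\<forall>x z. ch x z \<longrightarrow> (\<exists>y. ch x y \<and> ch y z)) \<and>
     (\<forall>p. open {q. ch p q} \<and> open {q. ch q p}) \<and>
     (\<forall>p. (\<exists>q. ch p q) \<and> (\<exists>q. ch q p)) \<and>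
     (\<forall>p U. open U \<and> p \<in> U \<longrightarrow>
        (\<exists>a b. ch a p \<and> ch p b \<and> {q. ch a q \<and> ch q b} \<subseteq> U))"

definition Ifut :: "('a \<Rightarrow> 'a \<Rightarrow> bool) \<Rightarrow> 'a \<Rightarrow> 'a set" where
  "Ifut ch p = {q. ch p q}"

definition Ipast :: "('a \<Rightarrow> 'a \<Rightarrow> bool) \<Rightarrow> 'a \<Rightarrow> 'a set" where
  "Ipast ch p = {q. ch q p}"

definition IfutS :: "('a \<Rightarrow> 'a \<Rightarrow> bool) \<Rightarrow> 'a set \<Rightarrow> 'a set" where
  "IfutS ch S = (\<Union>s\<in>S. Ifut ch s)"

definition IpastS :: "('a \<Rightarrow> 'a \<Rightarrow> bool) \<Rightarrow> 'a set \<Rightarrow> 'a set" where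
  "IpastS ch S = (\<Union>s\<in>S. Ipast ch s)"

definition past_set :: "('a \<Rightarrow> 'a \<Rightarrow> bool) \<Rightarrow> 'a set \<Rightarrow> bool" where
  "past_set ch A \<longleftrightarrow> (\<exists>S. A = IpastS ch S)"

definition future_set :: "('a \<Rightarrow> 'a \<Rightarrow> bool) \<Rightarrow> 'a set \<Rightarrow> bool" where
  "future_set ch A \<longleftrightarrow> (\<exists>S. A = IfutS ch S)"

definition IP :: "('a \<Rightarrow> 'a \<Rightarrow> bool) \<Rightarrow> 'a set \<Rightarrow> bool" where
  "IP ch P \<longleftrightarrow> P \<noteq> {} \<and> past_set ch P \<and>
     \<not> (\<exists>A B. past_set ch A \<and> past_set ch B \<and> A \<subset> P \<and> B \<subset> P \<and> P = A \<union> B)"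

definition IF :: "('a \<Rightarrow> 'a \<Rightarrow> bool) \<Rightarrow> 'a set \<Rightarrow> bool" where
  "IF ch F \<longleftrightarrow> F \<noteq> {} \<and> future_set ch F \<and>
     \<not> (\<exists>A B. future_set ch A \<and> future_set ch B \<and> A \<subset> F \<and> B \<subset> F \<and> F = A \<union> B)"

definition fP :: "('a \<Rightarrow> 'a \<Rightarrow> bool) \<Rightarrow> 'a set \<Rightarrow> 'a set" where
  "fP ch P = IfutS ch {x. P \<subseteq> Ipast ch x}"

definition pF :: "('a \<Rightarrow> 'a \<Rightarrow> bool) \<Rightarrow> 'a set \<Rightarrow> 'a set" where
  "pF ch F = IpastS ch {x. F \<subseteq> Ifut ch x}"

definition Rpf :: "('a \<Rightarrow> 'a \<Rightarrow> bool) \<Rightarrow> 'a set \<Rightarrow> 'a set \<Rightarrow> bool" where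
  "Rpf ch P F \<longleftrightarrow> IP ch P \<and> IF ch F \<and>
     F \<subseteq> fP ch P \<and> (\<forall>F'. IF ch F' \<and> F' \<subseteq> fP ch P \<and> F \<subseteq> F' \<longrightarrow> F' = F) \<and>
     P \<subseteq> pF ch F \<and> (\<forall>P'. IP ch P' \<and> P' \<subseteq> pF ch F \<and> P \<subseteq> P' \<longrightarrow> P' = P)"

definition Mbar :: "('a \<Rightarrow> 'a \<Rightarrow> bool) \<Rightarrow> ('a set \<times> 'a set) set" where
  "Mbar ch = {(P, F). Rpf ch P F
     \<or> (P = {} \<and> IF ch F \<and> \<not> (\<exists>P'. Rpf ch P' F))
     \<or> (F = {} \<and> IP ch P \<and> \<not> (\<exists>F'. Rpf ch P F'))}"

definition chronC :: "'a set \<times> 'a set \<Rightarrow> 'a set \<times> 'a set \<Rightarrow> bool" where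
  "chronC X Y \<longleftrightarrow> snd X \<inter> fst Y \<noteq> {}"

definition IfutC :: "('a \<Rightarrow> 'a \<Rightarrow> bool) \<Rightarrow> 'a set \<times> 'a set \<Rightarrow> ('a set \<times> 'a set) set" where
  "IfutC ch X = {Y \<in> Mbar ch. chronC X Y}"

definition IpastC :: "('a \<Rightarrow> 'a \<Rightarrow> bool) \<Rightarrow> 'a set \<times> 'a set \<Rightarrow> ('a set \<times> 'a set) set" where
  "IpastC ch X = {Y \<in> Mbar ch. chronC Y X}"

end

theory Submission
  imports Defs
begin

lemma sc_props:
  assumes "strongly_causal_chronology ch"
  shows "\<And>x y z. ch x y \<Longrightarrow> ch y z \<Longrightarrow> ch x z"
    and "\<And>x z. ch x z \<Longrightarrow> \<exists>y. ch x y \<and> ch y z"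
    and "\<And>p. open {q. ch p q}" and "\<And>p. open {q. ch q p}"
    and "\<And>p. \<exists>q. ch p q" and "\<And>p. \<exists>q. ch q p"
    and "\<And>p U. open U \<Longrightarrow> p \<in> U \<Longrightarrow> \<exists>a b. ch a p \<and> ch p b \<and> {q. ch a q \<and> ch q b} \<subseteq> U"
proof -
  note D = assms[unfolded strongly_causal_chronology_def]
  show "\<And>x y z. ch x y \<Longrightarrow> ch y z \<Longrightarrow> ch x z" using conjunct1[OF D] by blast
  show "\<And>x z. ch x z \<Longrightarrow> \<exists>y. ch x y \<and> ch y z" using conjunct1[OF conjunct2[OF conjunct2[OF D]]] by blast
  have D4: "\<forall>p. open {q. ch p q} \<and> open {q. ch q p}" using conjunct1[OF conjunct2[OF conjunct2[OF conjunct2[OF D]]]] .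
  show "\<And>p. open {q. ch p q}" using D4 by simp
  show "\<And>p. open {q. ch q p}" using D4 by simp
  have D5: "\<forall>p. (\<exists>q. ch p q) \<and> (\<exists>q. ch q p)" using conjunct1[OF conjunct2[OF conjunct2[OF conjunct2[OF conjunct2[OF D]]]]] .
  show "\<And>p. \<exists>q. ch p q" using D5 by simp
  show "\<And>p. \<exists>q. ch q p" using D5 by simp
  have D6: "\<forall>p U. open U \<and> p \<in> U \<longrightarrow> (\<exists>a b. ch a p \<and> ch p b \<and> {q. ch a q \<and> ch q b} \<subseteq> U)"
    using conjunct2[OF conjunct2[OF conjunct2[OF conjunct2[OF conjunct2[OF D]]]]] .
  show "\<And>p U. open U \<Longrightarrow> p \<in> U \<Longrightarrow> \<exists>a b. ch a p \<and> ch p b \<and> {q. ch a q \<and> ch q b} \<subseteq> U"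
    using D6 by blast
qed

lemma mem_IfutS: "y \<in> IfutS ch S \<longleftrightarrow> (\<exists>s\<in>S. ch s y)"
  by (simp add: IfutS_def Ifut_def)
lemma mem_IpastS: "y \<in> IpastS ch S \<longleftrightarrow> (\<exists>s\<in>S. ch y s)"
  by (simp add: IpastS_def Ipast_def)
lemma mem_Ipast: "y \<in> Ipast ch x \<longleftrightarrow> ch y x"
  by (simp add: Ipast_def)
lemma mem_Ifut: "y \<in> Ifut ch x \<longleftrightarrow> ch x y"
  by (simp add: Ifut_def)

lemma fut_mem:
  assumes "strongly_causal_chronology ch" "future_set ch F"
  shows "(F \<inter> Ipast ch y \<noteq> {}) \<longleftrightarrow> y \<in> F"
proof -
  note sc = sc_props[OF assms(1)]
  obtain S where S: "F = IfutS ch S" using assms(2) unfolding future_set_def by blast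
  have "(IfutS ch S \<inter> Ipast ch y \<noteq> {}) \<longleftrightarrow> y \<in> IfutS ch S"
  proof
    assume "IfutS ch S \<inter> Ipast ch y \<noteq> {}"
    then obtain z where "z \<in> IfutS ch S" "z \<in> Ipast ch y" by blast
    then obtain s where zs: "s \<in> S" "ch s z" "ch z y"
      unfolding mem_IfutS mem_Ipast by blast
    have "ch s y" using sc(1)[OF zs(2) zs(3)] .
    then show "y \<in> IfutS ch S" unfolding mem_IfutS using zs(1) by blast
  next
    assume "y \<in> IfutS ch S"
    then obtain s where s: "s \<in> S" "ch s y" unfolding mem_IfutS by blast
    obtain z where z: "ch s z" "ch z y" using sc(2)[OF s(2)] by blast
    have "z \<in> IfutS ch S \<inter> Ipast ch y" unfolding mem_IfutS mem_Ipast Int_iff using s z by blast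
    then show "IfutS ch S \<inter> Ipast ch y \<noteq> {}" by blast
  qed
  then show ?thesis unfolding S .
qed

lemma past_mem:
  assumes "strongly_causal_chronology ch" "past_set ch P"
  shows "(Ifut ch y \<inter> P \<noteq> {}) \<longleftrightarrow> y \<in> P"
proof -
  note sc = sc_props[OF assms(1)]
  obtain S where S: "P = IpastS ch S" using assms(2) unfolding past_set_def by blast
  have "(Ifut ch y \<inter> IpastS ch S \<noteq> {}) \<longleftrightarrow> y \<in> IpastS ch S"
  proof
    assume "Ifut ch y \<inter> IpastS ch S \<noteq> {}"
    then obtain z where "z \<in> Ifut ch y" "z \<in> IpastS ch S" by blast
    then obtain s where zs: "s \<in> S" "ch z s" "ch y z"
      unfolding mem_IpastS mem_Ifut by blast
    have "ch y s" using sc(1)[OF zs(3) zs(2)] .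
    then show "y \<in> IpastS ch S" unfolding mem_IpastS using zs(1) by blast
  next
    assume "y \<in> IpastS ch S"
    then obtain s where s: "s \<in> S" "ch y s" unfolding mem_IpastS by blast
    obtain z where z: "ch y z" "ch z s" using sc(2)[OF s(2)] by blast
    have "z \<in> Ifut ch y \<inter> IpastS ch S" unfolding mem_IpastS mem_Ifut Int_iff using s z by blast
    then show "Ifut ch y \<inter> IpastS ch S \<noteq> {}" by blast
  qed
  then show ?thesis unfolding S .
qed

lemma past_set_down:
  assumes "strongly_causal_chronology ch" "past_set ch A" "c \<in> A" "ch a c"
  shows "a \<in> A"
  using assms sc_props(1)[OF assms(1)] unfolding past_set_def IpastS_def Ipast_def by blast

lemma fut_set_up:
  assumes "strongly_causal_chronology ch" "future_set ch A" "c \<in> A" "ch c a"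
  shows "a \<in> A"
  using assms sc_props(1)[OF assms(1)] unfolding future_set_def IfutS_def Ifut_def by blast

lemma IP_Ipast:
  assumes sc0: "strongly_causal_chronology ch"
  shows "IP ch (Ipast ch y)"
proof -
  note sc = sc_props[OF sc0]
  have ne: "Ipast ch y \<noteq> {}" using sc(6) by (auto simp: Ipast_def)
  have ps: "past_set ch (Ipast ch y)" unfolding past_set_def
    by (rule exI[of _ "{y}"]) (simp add: IpastS_def)
  have dir: "\<exists>c. ch a c \<and> ch b c \<and> ch c y" if "ch a y" "ch b y" for a b
  proof -
    have o: "open ({q. ch a q} \<inter> {q. ch b q})" using sc(3) by blast
    have m: "y \<in> {q. ch a q} \<inter> {q. ch b q}" using that by simp
    obtain \<alpha> \<beta> where ab: "ch \<alpha> y" "ch y \<beta>"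
      "{q. ch \<alpha> q \<and> ch q \<beta>} \<subseteq> {q. ch a q} \<inter> {q. ch b q}"
      using sc(7)[OF o m] by blast
    obtain c where c: "ch \<alpha> c" "ch c y" using sc(2)[OF ab(1)] by blast
    have "ch c \<beta>" using sc(1)[OF c(2) ab(2)] .
    then have "c \<in> {q. ch a q} \<inter> {q. ch b q}" using ab(3) c(1) by blast
    then show ?thesis using c(2) by blast
  qed
  have "\<not> (\<exists>A B. past_set ch A \<and> past_set ch B \<and> A \<subset> Ipast ch y \<and> B \<subset> Ipast ch y \<and> Ipast ch y = A \<union> B)"
  proof
    assume "\<exists>A B. past_set ch A \<and> past_set ch B \<and> A \<subset> Ipast ch y \<and> B \<subset> Ipast ch y \<and> Ipast ch y = A \<union> B"
    then obtain A B where AB: "past_set ch A" "past_set ch B" "A \<subset> Ipast ch y" "B \<subset> Ipast ch y" "Ipast ch y = A \<union> B"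
      by blast
    obtain a where a: "a \<in> Ipast ch y" "a \<notin> A" using AB(3) by blast
    obtain b where b: "b \<in> Ipast ch y" "b \<notin> B" using AB(4) by blast
    obtain c where c: "ch a c" "ch b c" "ch c y" using dir a(1) b(1) by (auto simp: Ipast_def)
    have "c \<in> A \<union> B" using c(3) AB(5) by (auto simp: Ipast_def)
    then show False
      using past_set_down[OF sc0 AB(1) _ c(1)] past_set_down[OF sc0 AB(2) _ c(2)] a b by blast
  qed
  then show ?thesis using ne ps unfolding IP_def by blast
qed

lemma IF_Ifut:
  assumes sc0: "strongly_causal_chronology ch"
  shows "IF ch (Ifut ch y)"
proof -
  note sc = sc_props[OF sc0]
  have ne: "Ifut ch y \<noteq> {}" using sc(5) by (auto simp: Ifut_def)
  have ps: "future_set ch (Ifut ch y)" unfolding future_set_def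
    by (rule exI[of _ "{y}"]) (simp add: IfutS_def)
  have dir: "\<exists>c. ch c a \<and> ch c b \<and> ch y c" if "ch y a" "ch y b" for a b
  proof -
    have o: "open ({q. ch q a} \<inter> {q. ch q b})" using sc(4) by blast
    have m: "y \<in> {q. ch q a} \<inter> {q. ch q b}" using that by simp
    obtain \<alpha> \<beta> where ab: "ch \<alpha> y" "ch y \<beta>"
      "{q. ch \<alpha> q \<and> ch q \<beta>} \<subseteq> {q. ch q a} \<inter> {q. ch q b}"
      using sc(7)[OF o m] by blast
    obtain c where c: "ch y c" "ch c \<beta>" using sc(2)[OF ab(2)] by blast
    have "ch \<alpha> c" using sc(1)[OF ab(1) c(1)] .
    then have "c \<in> {q. ch q a} \<inter> {q. ch q b}" using ab(3) c(2) by blast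
    then show ?thesis using c(1) by blast
  qed
  have "\<not> (\<exists>A B. future_set ch A \<and> future_set ch B \<and> A \<subset> Ifut ch y \<and> B \<subset> Ifut ch y \<and> Ifut ch y = A \<union> B)"
  proof
    assume "\<exists>A B. future_set ch A \<and> future_set ch B \<and> A \<subset> Ifut ch y \<and> B \<subset> Ifut ch y \<and> Ifut ch y = A \<union> B"
    then obtain A B where AB: "future_set ch A" "future_set ch B" "A \<subset> Ifut ch y" "B \<subset> Ifut ch y" "Ifut ch y = A \<union> B"
      by blast
    obtain a where a: "a \<in> Ifut ch y" "a \<notin> A" using AB(3) by blast
    obtain b where b: "b \<in> Ifut ch y" "b \<notin> B" using AB(4) by blast
    obtain c where c: "ch c a" "ch c b" "ch y c" using dir a(1) b(1) by (auto simp: Ifut_def)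
    have "c \<in> A \<union> B" using c(3) AB(5) by (auto simp: Ifut_def)
    then show False
      using fut_set_up[OF sc0 AB(1) _ c(1)] fut_set_up[OF sc0 AB(2) _ c(2)] a b by blast
  qed
  then show ?thesis using ne ps unfolding IF_def by blast
qed

lemma exists_fst:
  assumes "IP ch P" shows "\<exists>F. (P, F) \<in> Mbar ch"
proof (cases "\<exists>F. Rpf ch P F")
  case True then show ?thesis unfolding Mbar_def by blast
next
  case False then show ?thesis using assms unfolding Mbar_def by blast
qed

lemma exists_snd:
  assumes "IF ch F" shows "\<exists>P. (P, F) \<in> Mbar ch"
proof (cases "\<exists>P. Rpf ch P F")
  case True then show ?thesis unfolding Mbar_def by blast
next
  case False then show ?thesis using assms unfolding Mbar_def by blast
qed

lemma Mbar_sets: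
  assumes "(P, F) \<in> Mbar ch"
  shows "past_set ch P \<and> future_set ch F"
proof -
  have e1: "past_set ch {}" unfolding past_set_def by (rule exI[of _ "{}"]) (simp add: IpastS_def)
  have e2: "future_set ch {}" unfolding future_set_def by (rule exI[of _ "{}"]) (simp add: IfutS_def)
  have "Rpf ch P F \<or> (P = {} \<and> IF ch F) \<or> (F = {} \<and> IP ch P)"
    using assms unfolding Mbar_def by blast
  moreover have "IP ch P \<Longrightarrow> past_set ch P" by (simp add: IP_def)
  moreover have "IF ch F \<Longrightarrow> future_set ch F" by (simp add: IF_def)
  moreover have "Rpf ch P F \<Longrightarrow> IP ch P \<and> IF ch F" by (simp add: Rpf_def)
  ultimately show ?thesis using e1 e2 by blast
qed

theorem theorem4:
  fixes ch :: "'a::t2_space \<Rightarrow> 'a \<Rightarrow> bool"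
  assumes "strongly_causal_chronology ch"
    and "X \<in> Mbar ch" and "Y \<in> Mbar ch"
  shows "(IfutC ch X = IfutC ch Y \<and> IpastC ch X = IpastC ch Y) \<longleftrightarrow> X = Y"
proof
  assume H: "IfutC ch X = IfutC ch Y \<and> IpastC ch X = IpastC ch Y"
  obtain P F where X: "X = (P, F)" by (cases X)
  obtain Q G where Y: "Y = (Q, G)" by (cases Y)
  have sX: "past_set ch P" "future_set ch F" using Mbar_sets assms(2) X by blast+
  have sY: "past_set ch Q" "future_set ch G" using Mbar_sets assms(3) Y by blast+
  have FG: "y \<in> F \<longleftrightarrow> y \<in> G" for y
  proof -
    obtain F' where Z: "(Ipast ch y, F') \<in> Mbar ch" using exists_fst IP_Ipast[OF assms(1)] by blast
    have "y \<in> F \<longleftrightarrow> (Ipast ch y, F') \<in> IfutC ch X"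
      using fut_mem[OF assms(1) sX(2)] Z by (auto simp: IfutC_def chronC_def X)
    also have "\<dots> \<longleftrightarrow> (Ipast ch y, F') \<in> IfutC ch Y" using H by simp
    also have "\<dots> \<longleftrightarrow> y \<in> G"
      using fut_mem[OF assms(1) sY(2)] Z by (auto simp: IfutC_def chronC_def Y)
    finally show ?thesis .
  qed
  have PQ: "y \<in> P \<longleftrightarrow> y \<in> Q" for y
  proof -
    obtain P' where Z: "(P', Ifut ch y) \<in> Mbar ch" using exists_snd IF_Ifut[OF assms(1)] by blast
    have "y \<in> P \<longleftrightarrow> (P', Ifut ch y) \<in> IpastC ch X"
      using past_mem[OF assms(1) sX(1)] Z by (auto simp: IpastC_def chronC_def X)
    also have "\<dots> \<longleftrightarrow> (P', Ifut ch y) \<in> IpastC ch Y" using H by simp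
    also have "\<dots> \<longleftrightarrow> y \<in> Q"
      using past_mem[OF assms(1) sY(1)] Z by (auto simp: IpastC_def chronC_def Y)
    finally show ?thesis .
  qed
  show "X = Y" using FG PQ X Y by auto
qed simp

end
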